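(* Assume (A1) and (A2'), and let $\alpha\ge\frac12\max\{0,\max_{j\in\Gamma_h}(V(x_j)+\omega)\}+\frac12$. Let $u_h^0\in\mathcal S_{h,p+1}$. Then for every $\tau>0$ and every $n\ge0$ the fully discrete GFALM iterates satisfy $$Q_h(u_h^{n+1})-Q_h(u_h^n)\le-\frac{\tau^2\|\widetilde\mu_h^{n+1}\|_{1,h}^2+4\tau\|\widetilde\mu_h^{n+1}\|_h^2}{2\|\widetilde u_h^{n+1}\|_{h,p+1}^2}.$$
   Context: Fully discrete setting ($d=1$). $\Omega=[x_0,x_0+L]$, $M>0$ even, $h=L/M$, grid $x_j=x_0+jh$, $j\in\Gamma_h=\{0,\dots,M-1\}$, periodic boundary conditions; $X_h=\mathbb R^M$. Let $\varphi_j(x)=\frac1M\sum_{l=-M/2}^{M/2}\frac1{a_l}e^{\mathrm il\sigma(x-x_j)}$ with $a_l=1$ for $|l|<M/2$, $a_l=2$ for $|l|=M/2$, $\sigma=2\pi/L$; $(\mathbf D_{xx})_{j,l}=\varphi_l''(x_j)$ ($-\mathbf D_{xx}$ symmetric positive semidefinite). $\langle u_h,v_h\rangle_h=h\sum_j u_jv_j$, $\|u_h\|_h^2=\langle u_h,u_h\rangle_h$, $|u_h|_{1,h}^2=\langle-\mathbf D_{xx}u_h,u_h\rangle_h$, $\|u_h\|_{1,h}^2=\|u_h\|_h^2+|u_h|_{1,h}^2$, $\|u_h\|_{h,q}=(h\sum_j|u_j|^q)^{1/q}$. With $V_j=V(x_j)$: $Q_h(u_h)=\frac12|u_h|_{1,h}^2+h\sum_jV_j|u_j|^2+\omega\|u_h\|_h^2$;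 $\mathcal S_{h,p+1}=\{u_h:\|u_h\|_{h,p+1}=1\}$; $\widetilde\lambda_h(u_h)=Q_h(u_h)/\|u_h\|_{h,p+1}^{p+1}$. Assumption (A1): $1<p<\infty$, $V\ge0$ bounded. $\lambda_0':=\inf\{\frac12|u_h|_{1,h}^2+h\sum_jV_j|u_j|^2:\|u_h\|_h=1\}$; (A2'): $\omega>-\lambda_0'$. Fully discrete GFALM: for $j\in\Gamma_h$, $\frac1\tau(\widetilde u_j^{n+1}-u_j^n)=-\widetilde\mu_j^{n+1}$, $\widetilde\mu_j^{n+1}=-\frac12(\mathbf D_{xx}\widetilde u_h^{n+1})_j+(V_j+\omega-\widetilde\lambda_h(u_h^n)|u_j^n|^{p-1})u_j^n+\alpha(\widetilde u_j^{n+1}-u_j^n)$, and $u_j^{n+1}=\widetilde u_j^{n+1}/\|\widetilde u_h^{n+1}\|_{h,p+1}$. *)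

theory Defs
  imports Complex_Main
begin

text \<open>Grid functions u_h in X_h = R^M are represented as nat => real; only the
values at indices 0..M-1 are used.\<close>

definition hstep :: "real \<Rightarrow> nat \<Rightarrow> real" where
  "hstep L M = L / real M"

definition grid :: "real \<Rightarrow> real \<Rightarrow> nat \<Rightarrow> nat \<Rightarrow> real" where
  "grid x0 L M j = x0 + real j * hstep L M"

definition acoef :: "nat \<Rightarrow> int \<Rightarrow> real" where
  "acoef M l = (if \<bar>l\<bar> = int M div 2 then 2 else 1)"

text \<open>Second derivative of the trigonometric cardinal function phi_l evaluated at x_j:
  phi_l''(x) = (1/M) * sum_k (1/a_k) (i k sigma)^2 exp(i k sigma (x - x_l)), sigma = 2 pi / L.
  This value is real; we take its real part to land in real.\<close>
definition Dxx :: "real \<Rightarrow> real \<Rightarrow> nat \<Rightarrow> nat \<Rightarrow> nat \<Rightarrow> real" where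
  "Dxx x0 L M j l = Re ((1 / of_nat M) *
     (\<Sum>k\<in>{-(int M div 2)..int M div 2}.
        complex_of_real (1 / acoef M k) * (\<i> * of_int k * complex_of_real (2 * pi / L))\<^sup>2 *
        exp (\<i> * of_int k * complex_of_real (2 * pi / L) *
             complex_of_real (grid x0 L M j - grid x0 L M l))))"

definition Dxx_app :: "real \<Rightarrow> real \<Rightarrow> nat \<Rightarrow> (nat \<Rightarrow> real) \<Rightarrow> nat \<Rightarrow> real" where
  "Dxx_app x0 L M u j = (\<Sum>l<M. Dxx x0 L M j l * u l)"

definition iph :: "real \<Rightarrow> nat \<Rightarrow> (nat \<Rightarrow> real) \<Rightarrow> (nat \<Rightarrow> real) \<Rightarrow> real" where
  "iph L M u v = hstep L M * (\<Sum>j<M. u j * v j)"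

definition normh :: "real \<Rightarrow> nat \<Rightarrow> (nat \<Rightarrow> real) \<Rightarrow> real" where
  "normh L M u = sqrt (iph L M u u)"

definition semi1h_sq :: "real \<Rightarrow> real \<Rightarrow> nat \<Rightarrow> (nat \<Rightarrow> real) \<Rightarrow> real" where
  "semi1h_sq x0 L M u = iph L M (\<lambda>j. - Dxx_app x0 L M u j) u"

definition norm1h_sq :: "real \<Rightarrow> real \<Rightarrow> nat \<Rightarrow> (nat \<Rightarrow> real) \<Rightarrow> real" where
  "norm1h_sq x0 L M u = (normh L M u)\<^sup>2 + semi1h_sq x0 L M u"

definition normhq :: "real \<Rightarrow> nat \<Rightarrow> real \<Rightarrow> (nat \<Rightarrow> real) \<Rightarrow> real" where
  "normhq L M q u = (hstep L M * (\<Sum>j<M. \<bar>u j\<bar> powr q)) powr (1 / q)"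

definition Qh :: "real \<Rightarrow> real \<Rightarrow> nat \<Rightarrow> (real \<Rightarrow> real) \<Rightarrow> real \<Rightarrow> (nat \<Rightarrow> real) \<Rightarrow> real" where
  "Qh x0 L M V \<omega> u = semi1h_sq x0 L M u / 2
     + hstep L M * (\<Sum>j<M. V (grid x0 L M j) * \<bar>u j\<bar>\<^sup>2) + \<omega> * (normh L M u)\<^sup>2"

definition lambda_tilde :: "real \<Rightarrow> real \<Rightarrow> nat \<Rightarrow> (real \<Rightarrow> real) \<Rightarrow> real \<Rightarrow> real \<Rightarrow> (nat \<Rightarrow> real) \<Rightarrow> real" where
  "lambda_tilde x0 L M V \<omega> p u = Qh x0 L M V \<omega> u / (normhq L M (p + 1) u) powr (p + 1)"

definition lambda0' :: "real \<Rightarrow> real \<Rightarrow> nat \<Rightarrow> (real \<Rightarrow> real) \<Rightarrow> real" where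
  "lambda0' x0 L M V = Inf {semi1h_sq x0 L M u / 2 + hstep L M * (\<Sum>j<M. V (grid x0 L M j) * \<bar>u j\<bar>\<^sup>2)
                          | u. normh L M u = 1}"

end

theory Submission
  imports Defs "HOL-Analysis.Analysis"
begin

definition ck :: "real \<Rightarrow> nat \<Rightarrow> int \<Rightarrow> real" where
  "ck L M k = (1 / acoef M k) * (of_int k * (2 * pi / L))\<^sup>2"

lemma Dxx_cos:
  "Dxx x0 L M j l = - (1 / real M) * (\<Sum>k\<in>{-(int M div 2)..int M div 2}.
      ck L M k * cos (of_int k * (2 * pi / L) * (grid x0 L M j - grid x0 L M l)))"
proof -
  have e: "Re (complex_of_real (1 / acoef M k) * (\<i> * of_int k * complex_of_real (2 * pi / L))\<^sup>2 *
        exp (\<i> * of_int k * complex_of_real (2 * pi / L) * complex_of_real d))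
       = - (ck L M k * cos (of_int k * (2 * pi / L) * d))" for k d
  proof -
    have "\<i> * of_int k * complex_of_real (2 * pi / L) * complex_of_real d = \<i> * complex_of_real (of_int k * (2 * pi / L) * d)"
      by simp
    moreover have "(\<i> * of_int k * complex_of_real (2 * pi / L))\<^sup>2 = - complex_of_real ((of_int k * (2 * pi / L))\<^sup>2)"
      by (simp add: power2_eq_square algebra_simps)
    ultimately show ?thesis unfolding ck_def
      by (simp add: Re_exp)
  qed
  have r: "Re (complex_of_real (1 / real M) * z) = (1 / real M) * Re z" for z
    by simp
  show ?thesis unfolding Dxx_def
    apply (subst of_real_1[symmetric])
    apply (subst of_real_of_nat_eq[symmetric])
    apply (subst of_real_divide[symmetric])
    apply (subst r)
    apply (subst Re_sum)
    apply (subst e)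
    apply (simp add: sum_negf)
    done
qed

lemma Dxx_sym: "Dxx x0 L M j l = Dxx x0 L M l j"
proof -
  have "cos (of_int k * (2 * pi / L) * (grid x0 L M j - grid x0 L M l)) =
        cos (of_int k * (2 * pi / L) * (grid x0 L M l - grid x0 L M j))" for k
    by (metis cos_minus minus_diff_eq mult_minus_right)
  then show ?thesis unfolding Dxx_cos by simp
qed

lemma ck_nonneg: "0 \<le> ck L M k"
  unfolding ck_def acoef_def by simp

lemma cos_sq_sum:
  fixes t :: "nat \<Rightarrow> real" and v :: "nat \<Rightarrow> real"
  shows "(\<Sum>j<M. (\<Sum>l<M. cos (t j - t l) * v l) * v j)
     = (\<Sum>j<M. cos (t j) * v j)\<^sup>2 + (\<Sum>j<M. sin (t j) * v j)\<^sup>2"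
proof -
  have "(\<Sum>j<M. (\<Sum>l<M. cos (t j - t l) * v l) * v j)
      = (\<Sum>j<M. \<Sum>l<M. (cos (t j) * v j) * (cos (t l) * v l) + (sin (t j) * v j) * (sin (t l) * v l))"
    by (auto simp add: cos_diff sum_distrib_right sum_distrib_left distrib_left distrib_right intro!: sum.cong)
  also have "\<dots> = (\<Sum>j<M. cos (t j) * v j)\<^sup>2 + (\<Sum>j<M. sin (t j) * v j)\<^sup>2"
    by (simp add: power2_eq_square sum_product sum.distrib)
  finally show ?thesis .
qed

lemma semi_formula:
  "(\<Sum>j<M. - Dxx_app x0 L M v j * v j) = (1 / real M) * (\<Sum>k\<in>{-(int M div 2)..int M div 2}. ck L M k *
     ((\<Sum>j<M. cos (of_int k * (2 * pi / L) * grid x0 L M j) * v j)\<^sup>2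
      + (\<Sum>j<M. sin (of_int k * (2 * pi / L) * grid x0 L M j) * v j)\<^sup>2))"
proof -
  let ?K = "{-(int M div 2)..int M div 2}"
  let ?t = "\<lambda>k j. of_int k * (2 * pi / L) * grid x0 L M j"
  have "(\<Sum>j<M. - Dxx_app x0 L M v j * v j)
     = (\<Sum>j<M. \<Sum>l<M. \<Sum>k\<in>?K. (1 / real M) * (ck L M k * (cos (?t k j - ?t k l) * v l * v j)))"
    unfolding Dxx_app_def Dxx_cos
    by (simp add: sum_distrib_left sum_distrib_right sum_negf right_diff_distrib algebra_simps)
  also have "\<dots> = (1 / real M) * (\<Sum>k\<in>?K. ck L M k * (\<Sum>j<M. (\<Sum>l<M. cos (?t k j - ?t k l) * v l) * v j))"
    apply (subst sum.swap)
    apply (subst (2) sum.swap)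
    apply (simp add: sum_distrib_left sum_distrib_right algebra_simps)
    done
  also have "\<dots> = (1 / real M) * (\<Sum>k\<in>?K. ck L M k *
     ((\<Sum>j<M. cos (?t k j) * v j)\<^sup>2 + (\<Sum>j<M. sin (?t k j) * v j)\<^sup>2))"
    by (simp only: cos_sq_sum)
  finally show ?thesis .
qed

lemma semi_nonneg: "0 \<le> (\<Sum>j<M. - Dxx_app x0 L M v j * v j)"
  unfolding semi_formula
  by (intro mult_nonneg_nonneg sum_nonneg add_nonneg_nonneg ck_nonneg) auto

lemma iph_nonneg: "hstep L M \<ge> 0 \<Longrightarrow> iph L M u u \<ge> 0"
  unfolding iph_def by (simp add: sum_nonneg)

lemma normh_sq: "hstep L M \<ge> 0 \<Longrightarrow> (normh L M u)\<^sup>2 = hstep L M * (\<Sum>j<M. (u j)\<^sup>2)"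
  unfolding normh_def using iph_nonneg[of L M u] by (simp add: iph_def power2_eq_square)

lemma Qh_expand: "hstep L M \<ge> 0 \<Longrightarrow> Qh x0 L M V \<omega> u = hstep L M * (\<Sum>j<M. (- Dxx_app x0 L M u j) * u j / 2 + (V (grid x0 L M j) + \<omega>) * (u j)\<^sup>2)"
proof -
  assume h: "hstep L M \<ge> 0"
  have "(\<Sum>j<M. (- Dxx_app x0 L M u j) * u j / 2 + (V (grid x0 L M j) + \<omega>) * (u j)\<^sup>2)
     = (\<Sum>j<M. (- Dxx_app x0 L M u j) * u j) / 2 + (\<Sum>j<M. V (grid x0 L M j) * (u j)\<^sup>2) + \<omega> * (\<Sum>j<M. (u j)\<^sup>2)"
    unfolding distrib_right sum.distrib sum_divide_distrib sum_distrib_left by simp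
  then show ?thesis unfolding Qh_def semi1h_sq_def normh_sq[OF h]
    by (simp add: iph_def distrib_left)
qed

lemma Dxx_app_cong: "(\<And>l. l < M \<Longrightarrow> u l = v l) \<Longrightarrow> Dxx_app x0 L M u j = Dxx_app x0 L M v j"
  unfolding Dxx_app_def by (auto intro!: sum.cong)

lemma Dxx_app_lin: "Dxx_app x0 L M (\<lambda>l. a * u l + b * v l) j = a * Dxx_app x0 L M u j + b * Dxx_app x0 L M v j"
  unfolding Dxx_app_def by (simp add: sum.distrib sum_distrib_left algebra_simps)

lemma Dxx_app_sym: "(\<Sum>j<M. Dxx_app x0 L M u j * v j) = (\<Sum>j<M. Dxx_app x0 L M v j * u j)"
  unfolding Dxx_app_def sum_distrib_right
  apply (subst sum.swap)
  apply (rule sum.cong, simp)+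
  apply (simp add: Dxx_sym)
  done

lemma Qh_cong: "(\<And>l. l < M \<Longrightarrow> u l = v l) \<Longrightarrow> hstep L M \<ge> 0 \<Longrightarrow> Qh x0 L M V \<omega> u = Qh x0 L M V \<omega> v"
  unfolding Qh_expand
  by (intro arg_cong[where f="\<lambda>x. hstep L M * x"] sum.cong refl) (simp add: Dxx_app_cong[of M u v])

lemma Qh_zero: "(\<And>l. l < M \<Longrightarrow> u l = 0) \<Longrightarrow> hstep L M \<ge> 0 \<Longrightarrow> Qh x0 L M V \<omega> u = 0"
  using Qh_cong[of M u "\<lambda>_. 0"] by (simp add: Qh_expand Dxx_app_def)

lemma Qh_scale: "hstep L M \<ge> 0 \<Longrightarrow> Qh x0 L M V \<omega> (\<lambda>j. c * u j) = c\<^sup>2 * Qh x0 L M V \<omega> u"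
proof -
  assume h: "hstep L M \<ge> 0"
  have "Dxx_app x0 L M (\<lambda>j. c * u j) j = c * Dxx_app x0 L M u j" for j
    using Dxx_app_lin[of x0 L M c u 0 u j] by simp
  then show ?thesis unfolding Qh_expand[OF h]
    by (simp add: sum_distrib_left power2_eq_square algebra_simps)
qed

lemma semi_nonneg2: "hstep L M \<ge> 0 \<Longrightarrow> semi1h_sq x0 L M v \<ge> 0"
  unfolding semi1h_sq_def iph_def using semi_nonneg[of x0 L M v] by simp

lemma semi_scale: "semi1h_sq x0 L M (\<lambda>j. c * u j) = c\<^sup>2 * semi1h_sq x0 L M u"
proof -
  have "Dxx_app x0 L M (\<lambda>j. c * u j) j = c * Dxx_app x0 L M u j" for j
    using Dxx_app_lin[of x0 L M c u 0 u j] by simp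
  then show ?thesis unfolding semi1h_sq_def iph_def
    by (simp add: sum_distrib_left power2_eq_square algebra_simps)
qed

lemma Qh_nonneg:
  assumes h: "hstep L M > 0" and V: "\<And>x. V x \<ge> 0" and A2: "\<omega> > - lambda0' x0 L M V"
  shows "Qh x0 L M V \<omega> u \<ge> 0"
proof -
  define E where "E v = semi1h_sq x0 L M v / 2 + hstep L M * (\<Sum>j<M. V (grid x0 L M j) * \<bar>v j\<bar>\<^sup>2)" for v
  have QE: "Qh x0 L M V \<omega> u = E u + \<omega> * (normh L M u)\<^sup>2" unfolding Qh_def E_def by simp
  define s where "s = normh L M u"
  have s2: "s\<^sup>2 = hstep L M * (\<Sum>j<M. (u j)\<^sup>2)" unfolding s_def using normh_sq h by simp
  have s0: "s \<ge> 0" unfolding s_def normh_def using iph_nonneg[of L M u] h by simp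
  show ?thesis
  proof (cases "s = 0")
    case True
    then have "(\<Sum>j<M. (u j)\<^sup>2) = 0" using s2 h by simp
    then have "\<And>j. j < M \<Longrightarrow> u j = 0"
      by (subst (asm) sum_nonneg_eq_0_iff) auto
    then show ?thesis using Qh_zero[of M u L x0 V \<omega>] h by simp
  next
    case False
    then have sp: "s > 0" using s0 by simp
    define w where "w j = (1 / s) * u j" for j
    have "(normh L M w)\<^sup>2 = hstep L M * (\<Sum>j<M. (u j)\<^sup>2) / s\<^sup>2"
      using normh_sq[of L M w] h unfolding w_def
      by (simp add: power_mult_distrib power_divide sum_divide_distrib[symmetric])
    then have "(normh L M w)\<^sup>2 = 1" using sp by (simp add: s2[symmetric])
    then have nw: "normh L M w = 1" unfolding normh_def
      by (metis iph_nonneg h less_imp_le normh_def real_sqrt_ge_zero power2_eq_1_iff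
          le_minus_one_simps(3) order_trans zero_le_one)
    have bdd: "bdd_below {semi1h_sq x0 L M u / 2 + hstep L M * (\<Sum>j<M. V (grid x0 L M j) * \<bar>u j\<bar>\<^sup>2)
                          | u. normh L M u = 1}"
      unfolding bdd_below_def
      by (rule exI[of _ 0], auto intro!: add_nonneg_nonneg mult_nonneg_nonneg sum_nonneg V semi_nonneg2
          simp: less_imp_le[OF h])
    have "lambda0' x0 L M V \<le> E w"
      unfolding lambda0'_def E_def
      by (rule cInf_lower[OF _ bdd]) (use nw in blast)
    moreover have "E w = E u / s\<^sup>2"
      unfolding E_def w_def semi_scale
      by (simp add: power_mult_distrib power_divide sum_divide_distrib[symmetric] sum_distrib_left add_divide_distrib)
    ultimately have "E u \<ge> lambda0' x0 L M V * s\<^sup>2" using sp by (simp add: field_simps)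
    then have "Qh x0 L M V \<omega> u \<ge> (lambda0' x0 L M V + \<omega>) * s\<^sup>2"
      using QE s_def by (simp add: algebra_simps)
    moreover have "(lambda0' x0 L M V + \<omega>) * s\<^sup>2 \<ge> 0" using A2 by simp
    ultimately show ?thesis by linarith
  qed
qed

lemma holder:
  assumes h: "hstep L M > 0" and p: "p > 1"
    and hu: "hstep L M * (\<Sum>j<M. \<bar>u j\<bar> powr (p + 1)) = 1"
    and Npos: "normhq L M (p + 1) v > 0"
  shows "hstep L M * (\<Sum>j<M. \<bar>u j\<bar> powr p * \<bar>v j\<bar>) \<le> normhq L M (p + 1) v"
proof -
  define N where "N = normhq L M (p + 1) v"
  define T where "T = hstep L M * (\<Sum>j<M. \<bar>v j\<bar> powr (p + 1))"
  have T0: "T \<ge> 0" unfolding T_def using h by (simp add: sum_nonneg)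
  have NT: "N = T powr (1 / (p + 1))" unfolding N_def T_def normhq_def by simp
  have Np: "N > 0" using Npos N_def by simp
  have NpT: "N powr (p + 1) = T" unfolding NT using T0 p by (simp add: powr_powr)
  have Tp: "T > 0" using NpT Np by (metis powr_gt_zero less_irrefl)
  have y: "\<bar>u j\<bar> powr p * (\<bar>v j\<bar> / N) \<le> \<bar>u j\<bar> powr (p + 1) * (p / (p + 1)) + (\<bar>v j\<bar> powr (p + 1) / T) / (p + 1)" for j
  proof -
    have "\<bar>u j\<bar> powr p * (\<bar>v j\<bar> / N) \<le> (\<bar>u j\<bar> powr p) powr ((p + 1) / p) / ((p + 1) / p) + (\<bar>v j\<bar> / N) powr (p + 1) / (p + 1)"
      by (rule Youngs_inequality) (use p Np in \<open>auto simp: field_simps\<close>)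
    also have "(\<bar>u j\<bar> powr p) powr ((p + 1) / p) = \<bar>u j\<bar> powr (p + 1)"
      using p by (simp add: powr_powr)
    also have "(\<bar>v j\<bar> / N) powr (p + 1) = \<bar>v j\<bar> powr (p + 1) / T"
      using Np by (simp add: powr_divide NpT)
    finally show ?thesis by (simp add: divide_simps)
  qed
  have "hstep L M * (\<Sum>j<M. \<bar>u j\<bar> powr p * (\<bar>v j\<bar> / N))
      \<le> hstep L M * (\<Sum>j<M. \<bar>u j\<bar> powr (p + 1) * (p / (p + 1)) + (\<bar>v j\<bar> powr (p + 1) / T) / (p + 1))"
    using h by (intro mult_left_mono sum_mono y) auto
  also have "\<dots> = (p / (p + 1)) * (hstep L M * (\<Sum>j<M. \<bar>u j\<bar> powr (p + 1)))
      + (T / T) / (p + 1)"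
    unfolding T_def sum.distrib sum_distrib_right[symmetric] sum_divide_distrib[symmetric] by (simp add: algebra_simps)
  also have "\<dots> = 1" using hu Tp p by (simp add: field_simps)
  finally have "hstep L M * (\<Sum>j<M. \<bar>u j\<bar> powr p * \<bar>v j\<bar>) / N \<le> 1"
    by (simp add: sum_divide_distrib[symmetric])
  then show ?thesis using Np N_def by (simp add: divide_simps)
qed

lemma per_j:
  fixes a b u m t c W lam P \<alpha> \<tau> :: real
  assumes t: "t = u - \<tau> * m" and c: "c = a - \<tau> * b"
    and mm: "m = - c / 2 + (W - lam * P) * u + \<alpha> * (t - u)"
  shows "(- c * t / 2 + W * t\<^sup>2) - (- a * u / 2 + W * u\<^sup>2) + 2 * \<tau> * m\<^sup>2
    + \<tau>\<^sup>2 / 2 * (- b * m) + \<tau>\<^sup>2 * ((2 * \<alpha> - W) * m\<^sup>2) + 2 * \<tau> * lam * (P * u * m)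
    = \<tau> / 2 * (b * u - a * m)"
proof -
  have a: "a = \<tau> * b - 2 * m + 2 * (W - lam * P) * u - 2 * \<alpha> * \<tau> * m"
  proof -
    have "2 * m = - c + 2 * (W - lam * P) * u + 2 * \<alpha> * (t - u)" using mm by simp
    then show ?thesis unfolding t c by algebra
  qed
  have "(- c * t / 2 + W * t\<^sup>2) - (- a * u / 2 + W * u\<^sup>2) + 2 * \<tau> * m\<^sup>2
    + \<tau>\<^sup>2 / 2 * (- b * m) + \<tau>\<^sup>2 * ((2 * \<alpha> - W) * m\<^sup>2) + 2 * \<tau> * lam * (P * u * m)
    - \<tau> / 2 * (b * u - a * m) = 0"
    unfolding t c a power2_eq_square by (simp add: field_simps)
  then show ?thesis by simp
qed

lemma pow_pm1: "p > 1 \<Longrightarrow> \<bar>x::real\<bar> powr (p - 1) * x * x = \<bar>x\<bar> powr (p + 1)"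
proof (cases "x = 0")
  case False
  assume p: "p > 1"
  have "\<bar>x\<bar> powr (p + 1) = \<bar>x\<bar> powr ((p - 1) + 2)" by (simp add: add.commute)
  also have "\<dots> = \<bar>x\<bar> powr (p - 1) * \<bar>x\<bar> powr 2"
    by (rule powr_add)
  also have "\<bar>x\<bar> powr 2 = x * x" using False by (simp add: powr_numeral power2_eq_square)
  finally show ?thesis by simp
qed simp

lemma pow_pm1_le: "p > 1 \<Longrightarrow> \<bar>x::real\<bar> powr (p - 1) * x * y \<le> \<bar>x\<bar> powr p * \<bar>y\<bar>"
proof (cases "x = 0")
  case False
  assume p: "p > 1"
  have "\<bar>x\<bar> powr (p - 1) * x * y \<le> \<bar>\<bar>x\<bar> powr (p - 1) * x * y\<bar>" by simp
  also have "\<dots> = \<bar>x\<bar> powr (p - 1) * \<bar>x\<bar> powr 1 * \<bar>y\<bar>" using False by (simp add: abs_mult)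
  also have "\<dots> = \<bar>x\<bar> powr ((p - 1) + 1) * \<bar>y\<bar>" by (simp only: powr_add)
  also have "\<dots> = \<bar>x\<bar> powr p * \<bar>y\<bar>" by simp
  finally show ?thesis .
qed simp

lemma normhq_pow: "hstep L M \<ge> 0 \<Longrightarrow> q > 0 \<Longrightarrow> normhq L M q v powr q = hstep L M * (\<Sum>j<M. \<bar>v j\<bar> powr q)"
  unfolding normhq_def by (simp add: powr_powr sum_nonneg)

lemma powr_eq1: "(x::real) \<ge> 0 \<Longrightarrow> a > 0 \<Longrightarrow> x powr a = 1 \<Longrightarrow> x = 1"
  by (metis powr_eq_one_iff_gen less_irrefl powr_0 zero_neq_one le_less)

theorem mainTheorem15:
  fixes x0 L \<omega> p \<alpha> \<tau> :: real and M :: nat and V :: "real \<Rightarrow> real"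
    and u ut mu :: "nat \<Rightarrow> nat \<Rightarrow> real" and n :: nat
  assumes L_pos: "L > 0" and M_pos: "M > 0" and M_even: "even M"
    and A1_p: "1 < p" and A1_V_nonneg: "\<And>x. V x \<ge> 0" and A1_V_bdd: "\<exists>B. \<forall>x. \<bar>V x\<bar> \<le> B"
    and A2': "\<omega> > - lambda0' x0 L M V"
    and alpha: "\<alpha> \<ge> max 0 (Max ((\<lambda>j. V (grid x0 L M j) + \<omega>) ` {..<M})) / 2 + 1 / 2"
    and tau: "\<tau> > 0"
    and init: "normhq L M (p + 1) (u 0) = 1"
    and step: "\<And>k j. j < M \<Longrightarrow> (ut (Suc k) j - u k j) / \<tau> = - mu (Suc k) j"
    and mu_def: "\<And>k j. j < M \<Longrightarrow> mu (Suc k) j =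
        - Dxx_app x0 L M (ut (Suc k)) j / 2
        + (V (grid x0 L M j) + \<omega> - lambda_tilde x0 L M V \<omega> p (u k) * \<bar>u k j\<bar> powr (p - 1)) * u k j
        + \<alpha> * (ut (Suc k) j - u k j)"
    and normalize: "\<And>k j. j < M \<Longrightarrow> u (Suc k) j = ut (Suc k) j / normhq L M (p + 1) (ut (Suc k))"
  shows "Qh x0 L M V \<omega> (u (Suc n)) - Qh x0 L M V \<omega> (u n)
         \<le> - (\<tau>\<^sup>2 * norm1h_sq x0 L M (mu (Suc n)) + 4 * \<tau> * (normh L M (mu (Suc n)))\<^sup>2)
             / (2 * (normhq L M (p + 1) (ut (Suc n)))\<^sup>2)"
proof -
  define h where "h = hstep L M"
  have hpos: "h > 0" unfolding h_def hstep_def using L_pos M_pos by simp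
  have h0: "hstep L M \<ge> 0" using hpos h_def by simp
  have hp: "hstep L M > 0" using hpos h_def by simp
  define W where "W j = V (grid x0 L M j) + \<omega>" for j
  have zn: "(\<forall>j<M. u k j = 0) \<or> h * (\<Sum>j<M. \<bar>u k j\<bar> powr (p + 1)) = 1" for k
  proof (cases k)
    case 0
    have "(h * (\<Sum>j<M. \<bar>u 0 j\<bar> powr (p + 1))) powr (1 / (p + 1)) = 1"
      using init unfolding normhq_def h_def by simp
    then have "h * (\<Sum>j<M. \<bar>u 0 j\<bar> powr (p + 1)) = 1"
      by (rule powr_eq1[rotated 2]) (use hpos A1_p in \<open>auto intro!: mult_nonneg_nonneg sum_nonneg\<close>)
    then show ?thesis using 0 by simp
  next
    case (Suc k')
    define N' where "N' = normhq L M (p + 1) (ut (Suc k'))"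
    have N'0: "N' \<ge> 0" unfolding N'_def normhq_def by simp
    show ?thesis
    proof (cases "N' = 0")
      case True
      then show ?thesis using Suc normalize N'_def by simp
    next
      case False
      then have N'p: "N' > 0" using N'0 by simp
      have "h * (\<Sum>j<M. \<bar>u k j\<bar> powr (p + 1)) = h * (\<Sum>j<M. \<bar>ut (Suc k') j\<bar> powr (p + 1) / N' powr (p + 1))"
        using Suc normalize N'_def N'p by (auto intro!: sum.cong simp: powr_divide abs_divide)
      also have "\<dots> = (h * (\<Sum>j<M. \<bar>ut (Suc k') j\<bar> powr (p + 1))) / N' powr (p + 1)"
        by (simp add: sum_divide_distrib[symmetric])
      also have "h * (\<Sum>j<M. \<bar>ut (Suc k') j\<bar> powr (p + 1)) = N' powr (p + 1)"
        unfolding N'_def h_def using normhq_pow[OF h0, of "p + 1"] A1_p by simp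
      also have "N' powr (p + 1) / N' powr (p + 1) = 1" using N'p by simp
      finally show ?thesis by simp
    qed
  qed
  define v where "v = u n"
  define t where "t = ut (Suc n)"
  define m where "m = mu (Suc n)"
  define lam where "lam = lambda_tilde x0 L M V \<omega> p v"
  define N where "N = normhq L M (p + 1) t"
  define P where "P j = \<bar>v j\<bar> powr (p - 1)" for j
  define a where "a j = Dxx_app x0 L M v j" for j
  define b where "b j = Dxx_app x0 L M m j" for j
  have ht: "t j = v j - \<tau> * m j" if "j < M" for j
    using step[OF that, of n] tau unfolding t_def v_def m_def by (simp add: field_simps)
  have hc: "Dxx_app x0 L M t j = a j - \<tau> * b j" for j
  proof -
    have "Dxx_app x0 L M t j = Dxx_app x0 L M (\<lambda>l. 1 * v l + (- \<tau>) * m l) j"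
      by (rule Dxx_app_cong) (simp add: ht)
    then show ?thesis unfolding a_def b_def Dxx_app_lin by simp
  qed
  have hm: "m j = - Dxx_app x0 L M t j / 2 + (W j - lam * P j) * v j + \<alpha> * (t j - v j)" if "j < M" for j
    using mu_def[OF that, of n] unfolding m_def t_def v_def lam_def W_def P_def by (simp add: algebra_simps)
  have sym: "(\<Sum>j<M. b j * v j) = (\<Sum>j<M. a j * m j)"
    unfolding a_def b_def by (rule Dxx_app_sym)
  define F where "F j = (- Dxx_app x0 L M t j * t j / 2 + W j * (t j)\<^sup>2) - (- a j * v j / 2 + W j * (v j)\<^sup>2) + 2 * \<tau> * (m j)\<^sup>2
    + \<tau>\<^sup>2 / 2 * (- b j * m j) + \<tau>\<^sup>2 * ((2 * \<alpha> - W j) * (m j)\<^sup>2) + 2 * \<tau> * lam * (P j * v j * m j)" for j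
  have Fj: "F j = \<tau> / 2 * (b j * v j - a j * m j)" if "j < M" for j
    unfolding F_def by (rule per_j[OF ht[OF that] hc hm[OF that]])
  have sumF: "(\<Sum>j<M. F j) = 0"
  proof -
    have "(\<Sum>j<M. F j) = (\<Sum>j<M. \<tau> / 2 * (b j * v j - a j * m j))" by (rule sum.cong) (simp_all add: Fj)
    also have "\<dots> = \<tau> / 2 * ((\<Sum>j<M. b j * v j) - (\<Sum>j<M. a j * m j))"
      by (simp only: sum_distrib_left[symmetric] sum_subtractf[symmetric])
    finally show ?thesis using sym by simp
  qed
  define SQt where "SQt = (\<Sum>j<M. - Dxx_app x0 L M t j * t j / 2 + W j * (t j)\<^sup>2)"
  define SQv where "SQv = (\<Sum>j<M. - a j * v j / 2 + W j * (v j)\<^sup>2)"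
  define Sm where "Sm = (\<Sum>j<M. (m j)\<^sup>2)"
  define Sb where "Sb = (\<Sum>j<M. - b j * m j)"
  define Sa where "Sa = (\<Sum>j<M. (2 * \<alpha> - W j) * (m j)\<^sup>2)"
  define SP where "SP = (\<Sum>j<M. P j * v j * m j)"
  have sumF2: "(\<Sum>j<M. F j) = SQt - SQv + 2 * \<tau> * Sm + \<tau>\<^sup>2 / 2 * Sb + \<tau>\<^sup>2 * Sa + 2 * \<tau> * lam * SP"
    unfolding F_def SQt_def SQv_def Sm_def Sb_def Sa_def SP_def
    by (simp add: sum.distrib sum_subtractf sum_distrib_left sum_negf)
  have core: "SQt = SQv - 2 * \<tau> * Sm - \<tau>\<^sup>2 / 2 * Sb - \<tau>\<^sup>2 * Sa - 2 * \<tau> * lam * SP"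
    using sumF sumF2 by simp
  have QT: "Qh x0 L M V \<omega> t = h * SQt" unfolding Qh_expand[OF h0] SQt_def h_def W_def by simp
  have QV: "Qh x0 L M V \<omega> v = h * SQv" unfolding Qh_expand[OF h0] SQv_def h_def W_def a_def by simp
  have Sm0: "Sm \<ge> 0" unfolding Sm_def by (simp add: sum_nonneg)
  have Sb0: "Sb \<ge> 0" unfolding Sb_def b_def using semi_nonneg[of x0 L M m] by simp
  have SaSm: "Sa \<ge> Sm" unfolding Sa_def Sm_def
  proof (rule sum_mono)
    fix j assume "j \<in> {..<M}"
    then have "W j \<le> Max (W ` {..<M})" by simp
    then have "2 * \<alpha> - W j \<ge> 1" using alpha unfolding W_def by (simp add: max_def split: if_splits)
    then show "(m j)\<^sup>2 \<le> (2 * \<alpha> - W j) * (m j)\<^sup>2"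
      using mult_right_mono[of 1 "2 * \<alpha> - W j" "(m j)\<^sup>2"] by simp
  qed
  have n1: "norm1h_sq x0 L M m = h * Sm + h * Sb"
    unfolding norm1h_sq_def normh_sq[OF h0] semi1h_sq_def iph_def Sm_def Sb_def b_def h_def by simp
  have n0: "(normh L M m)\<^sup>2 = h * Sm" unfolding normh_sq[OF h0] Sm_def h_def by simp
  have Qv0: "Qh x0 L M V \<omega> v \<ge> 0" by (rule Qh_nonneg[OF hp A1_V_nonneg A2'])
  have N0: "N \<ge> 0" unfolding N_def normhq_def by simp
  show ?thesis
  proof (cases "N = 0")
    case True
    have "Qh x0 L M V \<omega> (u (Suc n)) = 0"
      by (rule Qh_zero[OF _ h0]) (simp add: normalize True[unfolded N_def t_def])
    then show ?thesis using True Qv0 unfolding N_def t_def v_def by simp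
  next
    case False
    then have Np: "N > 0" using N0 by simp
    have key: "h * SQv - 2 * \<tau> * lam * (h * SP) \<le> h * SQv * N\<^sup>2"
    proof (cases "\<forall>j<M. v j = 0")
      case True
      then have "SP = 0" unfolding SP_def by simp
      moreover have "h * SQv = 0" using QV Qh_zero[OF _ h0, of v] True by simp
      ultimately show ?thesis by auto
    next
      case False
      then have hv: "h * (\<Sum>j<M. \<bar>v j\<bar> powr (p + 1)) = 1" using zn[of n] unfolding v_def by auto
      have nv: "normhq L M (p + 1) v = 1" unfolding normhq_def using hv h_def by simp
      have lamq: "lam = h * SQv" unfolding lam_def lambda_tilde_def nv using QV by simp
      have q0: "h * SQv \<ge> 0" using QV Qv0 by simp
      define X where "X = h * (\<Sum>j<M. P j * v j * t j)"
      have "\<tau> * (h * SP) = h * (\<Sum>j<M. P j * v j * v j) - X"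
      proof -
        have "\<tau> * SP = (\<Sum>j<M. P j * v j * v j - P j * v j * t j)"
          unfolding SP_def sum_distrib_left by (rule sum.cong) (simp_all add: ht algebra_simps)
        then have e: "\<tau> * SP = (\<Sum>j<M. P j * v j * v j) - (\<Sum>j<M. P j * v j * t j)"
          by (simp add: sum_subtractf)
        have "\<tau> * (h * SP) = h * (\<tau> * SP)" by simp
        then show ?thesis unfolding X_def e by (simp add: right_diff_distrib)
      qed
      also have "(\<Sum>j<M. P j * v j * v j) = (\<Sum>j<M. \<bar>v j\<bar> powr (p + 1))"
        unfolding P_def using pow_pm1[OF A1_p] by simp
      finally have tSP: "\<tau> * (h * SP) = 1 - X" using hv by simp
      have "X \<le> h * (\<Sum>j<M. \<bar>v j\<bar> powr p * \<bar>t j\<bar>)"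
        unfolding X_def P_def using hpos by (intro mult_left_mono sum_mono pow_pm1_le[OF A1_p]) auto
      also have "\<dots> \<le> N"
        using holder[OF hp A1_p, of v t] hv Np unfolding N_def h_def by simp
      finally have XN: "X \<le> N" .
      have "h * SQv - 2 * \<tau> * lam * (h * SP) = h * SQv - 2 * lam * (\<tau> * (h * SP))"
        by (simp add: algebra_simps)
      also have "\<dots> = h * SQv * (2 * X - 1)"
        unfolding tSP lamq by (simp add: algebra_simps)
      also have "\<dots> \<le> h * SQv * (2 * N - 1)" using XN q0 by (intro mult_left_mono) auto
      also have "\<dots> \<le> h * SQv * N\<^sup>2"
      proof -
        have "0 \<le> (N - 1)\<^sup>2" by simp
        then have "2 * N - 1 \<le> N\<^sup>2" by (simp add: power2_diff)
        then show ?thesis using q0 by (intro mult_left_mono) auto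
      qed
      finally show ?thesis .
    qed
    have Qn: "Qh x0 L M V \<omega> (u (Suc n)) = Qh x0 L M V \<omega> t / N\<^sup>2"
    proof -
      have "Qh x0 L M V \<omega> (u (Suc n)) = Qh x0 L M V \<omega> (\<lambda>j. (1 / N) * t j)"
        by (rule Qh_cong[OF _ h0]) (simp add: normalize N_def t_def)
      also have "\<dots> = (1 / N)\<^sup>2 * Qh x0 L M V \<omega> t" by (rule Qh_scale[OF h0])
      finally show ?thesis by (simp add: power_divide)
    qed
    have main: "h * SQt - h * SQv * N\<^sup>2 \<le> - (\<tau>\<^sup>2 * (h * Sm + h * Sb) + 4 * \<tau> * (h * Sm)) / 2"
    proof -
      have "h * SQt = h * SQv - 2 * \<tau> * (h * Sm) - \<tau>\<^sup>2 / 2 * (h * Sb) - \<tau>\<^sup>2 * (h * Sa) - 2 * \<tau> * lam * (h * SP)"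
        unfolding core by (simp add: algebra_simps)
      moreover have "\<tau>\<^sup>2 * (h * Sa) \<ge> \<tau>\<^sup>2 * (h * Sm)" using SaSm hpos by (simp add: mult_left_mono)
      moreover have "\<tau>\<^sup>2 * (h * Sm) \<ge> 0" using Sm0 hpos by simp
      ultimately show ?thesis using key by (simp add: algebra_simps)
    qed
    have "Qh x0 L M V \<omega> (u (Suc n)) - Qh x0 L M V \<omega> (u n) = (h * SQt - h * SQv * N\<^sup>2) / N\<^sup>2"
      using Qn QT QV Np unfolding v_def by (simp add: field_simps)
    also have "\<dots> \<le> (- (\<tau>\<^sup>2 * (h * Sm + h * Sb) + 4 * \<tau> * (h * Sm)) / 2) / N\<^sup>2"
      using main Np by (intro divide_right_mono) auto
    also have "\<dots> = - (\<tau>\<^sup>2 * norm1h_sq x0 L M (mu (Suc n)) + 4 * \<tau> * (normh L M (mu (Suc n)))\<^sup>2)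
             / (2 * (normhq L M (p + 1) (ut (Suc n)))\<^sup>2)"
      unfolding n1[unfolded m_def] n0[unfolded m_def] N_def[unfolded t_def] by simp
    finally show ?thesis .
  qed
qed

end
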